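(* Let $i,j\geq 0$ and $R=(\gamma_{\mathrm{low}},\gamma_{\mathrm{mid}},\gamma_{\mathrm{up}})\in\mathcal{R}_{i,j}$, and let $\tau(R):=(\mathrm{mir}(\gamma_{\mathrm{up}}),\mathrm{mir}(\gamma_{\mathrm{mid}}),\mathrm{mir}(\gamma_{\mathrm{low}}))$, where $\mathrm{mir}(c_1\cdots c_n):=c_n\cdots c_1$ is the mirror word. Then $\tau(R)\in\mathcal{G}_{i,j}$ if and only if $R\in\mathcal{G}_{i,j}$.
   Context: A walk is a finite word on $\{N,E\}$, viewed as a lattice path from $(0,0)$ with steps $N=(0,1)$, $E=(1,0)$. For walks $\gamma,\gamma'$, $\gamma'$ is above $\gamma$ if they have the same endpoint and no East step of $\gamma$ lies strictly above the East step of $\gamma'$ in the same vertical column. For $\nu$ ending at $(i,j)$, $\mathcal{W}_\nu$ is the set of walks above $\nu$. For $\gamma\in\mathcal{W}_\nu$ and a point $p=(x,y)$ on $\gamma$, let $x'$ be the abscissa of the North step of $\nu$ from ordinate $y$ to $y+1$ ($x'=i$ if $y=j$) and $\ell(p)=x'-x$. If $p$ is preceded by $E$ and followed by $N$ in $\gamma$, let $p'$ be the next point after $p$ on $\gamma$ with $\ell(p')=\ell(p)$, and let $\mathrm{push}_p(\gamma)$ be obtained by moving the $E$ step preceding $p$ to just after $p'$. $\mathrm{Tam}(\nu)$ is the order on $\mathcal{W}_\nu$ given by the reflexive-transitive closure of $\gamma\leq\mathrm{push}_p(\gamma)$. $\mathcal{G}_{i,j}$ is the set of triples $(\nu,\gamma,\gamma')$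 with $\nu$ ending at $(i,j)$, $\gamma,\gamma'\in\mathcal{W}_\nu$ and $\gamma\leq\gamma'$ in $\mathrm{Tam}(\nu)$. $\mathcal{R}_{i,j}$ is the set of triples $(\nu,\gamma,\gamma')$ of walks all ending at $(i,j)$ with $\gamma'$ above $\gamma$ and $\gamma$ above $\nu$. *)

theory Defs
  imports Main
begin

datatype step = N | E

type_synonym walk = "step list"

definition ecount :: "walk \<Rightarrow> nat" where "ecount w = length (filter (\<lambda>s. s = E) w)"
definition ncount :: "walk \<Rightarrow> nat" where "ncount w = length (filter (\<lambda>s. s = N) w)"
definition endpoint :: "walk \<Rightarrow> nat \<times> nat" where "endpoint w = (ecount w, ncount w)"

text \<open>ordinate of the East step of w in column x (from abscissa x to x+1),
  i.e. the number of N steps before the (x+1)-th E step.\<close>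
fun eheight :: "walk \<Rightarrow> nat \<Rightarrow> nat" where
  "eheight [] k = 0"
| "eheight (N # w) k = Suc (eheight w k)"
| "eheight (E # w) 0 = 0"
| "eheight (E # w) (Suc k) = eheight w k"

text \<open>abscissa of the North step of w from ordinate y to y+1,
  i.e. the number of E steps before the (y+1)-th N step.\<close>
fun nabsc :: "walk \<Rightarrow> nat \<Rightarrow> nat" where
  "nabsc [] k = 0"
| "nabsc (E # w) k = Suc (nabsc w k)"
| "nabsc (N # w) 0 = 0"
| "nabsc (N # w) (Suc k) = nabsc w k"

definition above :: "walk \<Rightarrow> walk \<Rightarrow> bool" where
  "above g' g \<longleftrightarrow> endpoint g' = endpoint g \<and> (\<forall>x < ecount g. eheight g x \<le> eheight g' x)"

definition Wset :: "walk \<Rightarrow> walk set" where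
  "Wset \<nu> = {g. above g \<nu>}"

definition pt :: "walk \<Rightarrow> nat \<Rightarrow> nat \<times> nat" where
  "pt g k = endpoint (take k g)"

text \<open>horizontal distance ell(p) of the point p = pt g k to nu\<close>
definition ell :: "walk \<Rightarrow> walk \<Rightarrow> nat \<Rightarrow> int" where
  "ell \<nu> g k = (let (x, y) = pt g k;
                  x' = (if y = ncount \<nu> then ecount \<nu> else nabsc \<nu> y)
              in int x' - int x)"

text \<open>push \<nu> g h: h = push_p(g) for some valley point p = pt g k of g
  (preceded by E, followed by N); p' = pt g k' is the next point after p with the
  same ell, and the E step preceding p is moved to just after p'.\<close>
definition push :: "walk \<Rightarrow> walk \<Rightarrow> walk \<Rightarrow> bool" where
  "push \<nu> g h \<longleftrightarrow> (\<exists>k k'. 0 < k \<and> k < length g \<and> g ! (k - 1) = E \<and> g ! k = N \<and>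
      k < k' \<and> k' \<le> length g \<and> ell \<nu> g k' = ell \<nu> g k \<and>
      (\<forall>m. k < m \<and> m < k' \<longrightarrow> ell \<nu> g m \<noteq> ell \<nu> g k) \<and>
      h = take (k - 1) g @ drop k (take k' g) @ [E] @ drop k' g)"

definition tam_le :: "walk \<Rightarrow> walk \<Rightarrow> walk \<Rightarrow> bool" where
  "tam_le \<nu> g g' \<longleftrightarrow> g \<in> Wset \<nu> \<and> g' \<in> Wset \<nu> \<and>
     (\<lambda>a b. a \<in> Wset \<nu> \<and> b \<in> Wset \<nu> \<and> push \<nu> a b)\<^sup>*\<^sup>* g g'"

definition Gset :: "nat \<Rightarrow> nat \<Rightarrow> (walk \<times> walk \<times> walk) set" where
  "Gset i j = {(\<nu>, g, g'). endpoint \<nu> = (i, j) \<and> g \<in> Wset \<nu> \<and> g' \<in> Wset \<nu> \<and> tam_le \<nu> g g'}"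

definition Rset :: "nat \<Rightarrow> nat \<Rightarrow> (walk \<times> walk \<times> walk) set" where
  "Rset i j = {(\<nu>, g, g'). endpoint \<nu> = (i, j) \<and> endpoint g = (i, j) \<and> endpoint g' = (i, j) \<and>
                above g' g \<and> above g \<nu>}"

definition mir :: "walk \<Rightarrow> walk" where "mir w = rev w"

definition tau :: "walk \<times> walk \<times> walk \<Rightarrow> walk \<times> walk \<times> walk" where
  "tau R = (case R of (lo, mid, up) \<Rightarrow> (mir up, mir mid, mir lo))"

end

theory Submission
  imports Defs
begin

definition goodR :: "(nat \<Rightarrow> int) \<Rightarrow> (nat \<Rightarrow> int) \<Rightarrow> (nat \<Rightarrow> int) \<Rightarrow> nat \<Rightarrow> bool" where
  "goodR U V W n \<longleftrightarrow> (\<forall>p q t. p < q \<and> q \<le> n \<and> 0 \<le> t \<and> t < U (Suc p) - U p \<and>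
      U q - W q \<le> U p - W p + t \<longrightarrow> (\<exists>k. p < k \<and> k \<le> q \<and> U k - V k \<le> U p - V p + t))"

definition violR :: "(nat \<Rightarrow> int) \<Rightarrow> (nat \<Rightarrow> int) \<Rightarrow> (nat \<Rightarrow> int) \<Rightarrow> nat \<Rightarrow> nat \<Rightarrow> nat \<Rightarrow> int \<Rightarrow> bool" where
  "violR U V W n p q t \<longleftrightarrow> p < q \<and> q \<le> n \<and> 0 \<le> t \<and> t < U (Suc p) - U p \<and>
      U q - W q \<le> U p - W p + t \<and> (\<forall>k. p < k \<and> k < q \<longrightarrow> U p - W p + t < U k - W k) \<and>
      (\<forall>k. p < k \<and> k \<le> q \<longrightarrow> U p - V p + t < U k - V k)"

lemma viol_of_bad:
  assumes "p < q" "q \<le> n" "0 \<le> t" "t < U (Suc p) - U p" "U q - W q \<le> U p - W p + t"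
    and "\<forall>k. p < k \<and> k \<le> q \<longrightarrow> U p - V p + t < U k - V k"
  shows "\<exists>q'. q' \<le> q \<and> violR U V W n p q' t"
proof -
  define q' where "q' = (LEAST x. p < x \<and> U x - W x \<le> U p - W p + t)"
  have ex: "p < q \<and> U q - W q \<le> U p - W p + t" using assms by auto
  have q'1: "p < q' \<and> U q' - W q' \<le> U p - W p + t"
    unfolding q'_def by (rule LeastI[of _ q], rule ex)
  have q'2: "q' \<le> q" unfolding q'_def by (rule Least_le, rule ex)
  have q'3: "U p - W p + t < U k - W k" if "p < k" "k < q'" for k
    using not_less_Least[of k "\<lambda>x. p < x \<and> U x - W x \<le> U p - W p + t"] that
    unfolding q'_def[symmetric] by auto
  show ?thesis using q'1 q'2 q'3 assms unfolding violR_def by (intro exI[of _ q']) auto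
qed

lemma good_iff_noviol: "goodR U V W n \<longleftrightarrow> \<not> (\<exists>p q t. violR U V W n p q t)"
proof
  assume g: "goodR U V W n"
  show "\<not> (\<exists>p q t. violR U V W n p q t)"
  proof
    assume "\<exists>p q t. violR U V W n p q t"
    then obtain p q t where v: "violR U V W n p q t" by blast
    then obtain k where "p < k" "k \<le> q" "U k - V k \<le> U p - V p + t"
      using g unfolding goodR_def violR_def by blast
    with v show False unfolding violR_def by force
  qed
next
  assume nv: "\<not> (\<exists>p q t. violR U V W n p q t)"
  show "goodR U V W n" unfolding goodR_def
  proof (intro allI impI)
    fix p q t assume h: "p < q \<and> q \<le> n \<and> 0 \<le> t \<and> t < U (Suc p) - U p \<and> U q - W q \<le> U p - W p + t"
    show "\<exists>k. p < k \<and> k \<le> q \<and> U k - V k \<le> U p - V p + t"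
    proof (rule ccontr)
      assume "\<not> ?thesis"
      hence "\<forall>k. p < k \<and> k \<le> q \<longrightarrow> U p - V p + t < U k - V k" by force
      from viol_of_bad[OF _ _ _ _ _ this] h nv show False by blast
    qed
  qed
qed

lemma key_dual:
  fixes U V W :: "nat \<Rightarrow> int"
  assumes monoU: "\<forall>x<n. U x \<le> U (Suc x)" and monoV: "\<forall>x<n. V x \<le> V (Suc x)"
    and v: "violR U V W n p q t"
    and minimal: "\<forall>p' q' t'. violR U V W n p' q' t' \<longrightarrow> q - p \<le> q' - p'"
  shows "\<exists>t'. violR (\<lambda>k. U n - W (n - k)) (\<lambda>k. U n - V (n - k)) (\<lambda>k. U n - U (n - k)) n (n - q) (n - p) t'"
proof -
  define a where "a x = U x - V x" for x
  define s where "s x = U x - W x" for x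
  define b where "b x = V x - W x" for x
  have v1: "p < q" "q \<le> n" "0 \<le> t" "t < U (Suc p) - U p" "s q \<le> s p + t"
    and v2: "\<And>k. p < k \<Longrightarrow> k < q \<Longrightarrow> s p + t < s k"
    and v3: "\<And>k. p < k \<Longrightarrow> k \<le> q \<Longrightarrow> a p + t < a k"
    using v unfolding violR_def a_def s_def by auto
  define t' where "t' = max 0 (s p - s q)"
  have t'0: "0 \<le> t'" unfolding t'_def by simp
  have A: "t' < W q - W (q - 1)"
  proof (cases "q - 1 = p")
    case True
    hence q: "q = Suc p" using v1 by auto
    show ?thesis using v1 unfolding t'_def s_def q by auto
  next
    case False
    hence pq: "p < q - 1" using v1 by auto
    have "s p + t < s (q - 1)" using v2[OF pq] v1 by auto
    moreover have "U (q - 1) \<le> U q"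
    proof -
      obtain q' where q': "q = Suc q'" using v1 by (cases q) auto
      show ?thesis using monoU v1 unfolding q' by auto
    qed
    ultimately have "U (q - 1) \<le> U q" "s p + t < s (q - 1)" by auto
    thus ?thesis using v1 unfolding t'_def s_def max_def by (auto split: if_splits)
  qed
  have B: "s p \<le> s q + t'" unfolding t'_def by linarith
  have C: "s q + t' < s m" if "p < m" "m < q" for m
    using v2[OF that] v1 unfolding t'_def by auto
  have Dp: "b q + t' < b p"
    using v3[of q] v1 unfolding t'_def a_def s_def b_def by auto
  have D: "b q + t' < b m" if "p \<le> m" "m < q" for m
  proof (rule ccontr)
    assume "\<not> ?thesis"
    hence ex: "p \<le> m \<and> m < q \<and> b m \<le> b q + t'" using that by auto
    define m0 where "m0 = (LEAST x. p \<le> x \<and> x < q \<and> b x \<le> b q + t')"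
    have m01: "p \<le> m0 \<and> m0 < q \<and> b m0 \<le> b q + t'" unfolding m0_def by (rule LeastI[of _ m], rule ex)
    have m02: "b q + t' < b x" if "p \<le> x" "x < m0" for x
      using not_less_Least[of x "\<lambda>x. p \<le> x \<and> x < q \<and> b x \<le> b q + t'"] that m01
      unfolding m0_def[symmetric] by force
    have pm0: "p < m0" using m01 Dp by (cases "p = m0") auto
    define mu where "mu x = max (a x) (s m0 - b x)" for x
    have exy: "p \<le> p \<and> p < m0 \<and> mu p < a m0"
      using pm0 v3[of m0] m01 m02[of p] v1 unfolding mu_def a_def s_def b_def by auto
    define y2 where "y2 = (GREATEST x. p \<le> x \<and> x < m0 \<and> mu x < a m0)"
    have y21: "p \<le> y2 \<and> y2 < m0 \<and> mu y2 < a m0"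
      unfolding y2_def by (rule GreatestI_nat[of _ p m0], rule exy, auto)
    have y22: "\<not> mu x < a m0" if "y2 < x" "x < m0" for x
    proof
      assume "mu x < a m0"
      hence "x \<le> y2" unfolding y2_def using that y21
        by (intro Greatest_le_nat[of _ x m0]) auto
      thus False using that by auto
    qed
    define t2 where "t2 = max 0 (s m0 - s y2)"
    have mu_y2: "mu y2 = a y2 + t2" unfolding mu_def t2_def a_def s_def b_def by auto
    have big: "a y2 + t2 < a x" if "y2 < x" "x \<le> m0" for x
    proof (cases "x = m0")
      case True thus ?thesis using y21 mu_y2 by auto
    next
      case False
      hence xm: "x < m0" using that by auto
      have "b q + t' < b x" using m02[of x] xm that y21 by auto
      hence "s m0 - b x < a m0" using m01 unfolding a_def s_def b_def by auto
      hence "a m0 \<le> a x" using y22[OF that(1) xm] unfolding mu_def by auto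
      thus ?thesis using y21 mu_y2 by auto
    qed
    have t2D: "t2 < U (Suc y2) - U y2"
    proof -
      have "a y2 + t2 < a (Suc y2)" using big[of "Suc y2"] y21 by auto
      moreover have "V y2 \<le> V (Suc y2)" using monoV y21 m01 v1 by auto
      ultimately show ?thesis unfolding a_def by auto
    qed
    have sm0: "s m0 \<le> s y2 + t2" unfolding t2_def by auto
    obtain q2 where q2: "q2 \<le> m0" "violR U V W n y2 q2 t2"
      using viol_of_bad[of y2 m0 n t2 U W V] y21 m01 v1 t2D sm0 big
      unfolding t2_def s_def a_def by force
    have "q - p \<le> q2 - y2" using minimal q2 by blast
    moreover have "y2 < q2" using q2 unfolding violR_def by auto
    ultimately show False using q2 y21 m01 by auto
  qed
  show ?thesis
  proof (intro exI[of _ t'], unfold violR_def, intro conjI allI impI)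
    show "n - q < n - p" using v1 by auto
    show "n - p \<le> n" by auto
    show "0 \<le> t'" by (rule t'0)
    have e1: "n - Suc (n - q) = q - 1" "n - (n - q) = q" using v1 by auto
    show "t' < U n - W (n - Suc (n - q)) - (U n - W (n - (n - q)))"
      unfolding e1 using A by auto
    have e2: "n - (n - p) = p" using v1 by auto
    show "U n - W (n - (n - p)) - (U n - U (n - (n - p))) \<le> U n - W (n - (n - q)) - (U n - U (n - (n - q))) + t'"
      unfolding e1 e2 using B unfolding s_def by auto
  next
    fix k assume k: "n - q < k \<and> k < n - p"
    hence "p < n - k" "n - k < q" using v1 by auto
    from C[OF this] have "s q + t' < s (n - k)" .
    moreover have "n - (n - q) = q" using v1 by auto
    ultimately show "U n - W (n - (n - q)) - (U n - U (n - (n - q))) + t' < U n - W (n - k) - (U n - U (n - k))"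
      unfolding s_def by auto
  next
    fix k assume k: "n - q < k \<and> k \<le> n - p"
    hence "p \<le> n - k" "n - k < q" using v1 by auto
    from D[OF this] have "b q + t' < b (n - k)" .
    moreover have "n - (n - q) = q" using v1 by auto
    ultimately show "U n - W (n - (n - q)) - (U n - V (n - (n - q))) + t' < U n - W (n - k) - (U n - V (n - k))"
      unfolding b_def by auto
  qed
qed


lemma goodR_cong:
  assumes eq: "\<And>k. k \<le> n \<Longrightarrow> U k = U' k \<and> V k = V' k \<and> W k = W' k"
  shows "goodR U V W n = goodR U' V' W' n"
proof
  assume g: "goodR U V W n"
  show "goodR U' V' W' n" unfolding goodR_def
  proof (intro allI impI)
    fix p q t assume H: "p < q \<and> q \<le> n \<and> 0 \<le> t \<and> t < U' (Suc p) - U' p \<and> U' q - W' q \<le> U' p - W' p + t"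
    have e: "U p = U' p \<and> V p = V' p \<and> W p = W' p" "U q = U' q \<and> V q = V' q \<and> W q = W' q"
      "U (Suc p) = U' (Suc p)" using eq[of p] eq[of q] eq[of "Suc p"] H by auto
    obtain k where k: "p < k" "k \<le> q" "U k - V k \<le> U p - V p + t"
      using g[unfolded goodR_def, rule_format, of p q t] H e by auto
    show "\<exists>k. p < k \<and> k \<le> q \<and> U' k - V' k \<le> U' p - V' p + t"
      using k e eq[of k] H by (intro exI[of _ k]) auto
  qed
next
  assume g: "goodR U' V' W' n"
  show "goodR U V W n" unfolding goodR_def
  proof (intro allI impI)
    fix p q t assume H: "p < q \<and> q \<le> n \<and> 0 \<le> t \<and> t < U (Suc p) - U p \<and> U q - W q \<le> U p - W p + t"
    have e: "U p = U' p \<and> V p = V' p \<and> W p = W' p" "U q = U' q \<and> V q = V' q \<and> W q = W' q"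
      "U (Suc p) = U' (Suc p)" using eq[of p] eq[of q] eq[of "Suc p"] H by auto
    obtain k where k: "p < k" "k \<le> q" "U' k - V' k \<le> U' p - V' p + t"
      using g[unfolded goodR_def, rule_format, of p q t] H e by auto
    show "\<exists>k. p < k \<and> k \<le> q \<and> U k - V k \<le> U p - V p + t"
      using k e eq[of k] H by (intro exI[of _ k]) auto
  qed
qed

lemma notgood_dual:
  fixes U V W :: "nat \<Rightarrow> int"
  assumes monoU: "\<forall>x<n. U x \<le> U (Suc x)" and monoV: "\<forall>x<n. V x \<le> V (Suc x)"
    and ng: "\<not> goodR U V W n"
  shows "\<not> goodR (\<lambda>k. U n - W (n - k)) (\<lambda>k. U n - V (n - k)) (\<lambda>k. U n - U (n - k)) n"
proof -
  obtain p q t where "violR U V W n p q t" using ng good_iff_noviol by blast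
  hence "(\<lambda>(p, q, t). violR U V W n p q t) (p, q, t)" by simp
  from ex_has_least_nat[of "\<lambda>(p, q, t). violR U V W n p q t" "(p, q, t)" "\<lambda>(p, q, t). q - p", OF this]
  obtain x where x: "(\<lambda>(p, q, t). violR U V W n p q t) x"
    "\<forall>y. (\<lambda>(p, q, t). violR U V W n p q t) y \<longrightarrow> (\<lambda>(p, q, t). q - p) x \<le> (\<lambda>(p, q, t). q - p) y" by blast
  obtain p0 q0 t0 where x0: "x = (p0, q0, t0)" by (cases x) auto
  have v0: "violR U V W n p0 q0 t0" using x x0 by simp
  have mn: "\<forall>p' q' t'. violR U V W n p' q' t' \<longrightarrow> q0 - p0 \<le> q' - p'"
  proof (intro allI impI)
    fix p' q' t' assume "violR U V W n p' q' t'"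
    thus "q0 - p0 \<le> q' - p'" using x(2)[rule_format, of "(p', q', t')"] x0 by simp
  qed
  from key_dual[OF monoU monoV v0 mn] show ?thesis using good_iff_noviol by blast
qed

theorem good_dual:
  fixes U V W :: "nat \<Rightarrow> int"
  assumes monoU: "\<forall>x<n. U x \<le> U (Suc x)" and monoV: "\<forall>x<n. V x \<le> V (Suc x)"
    and monoW: "\<forall>x<n. W x \<le> W (Suc x)" and W0: "W 0 = 0" and Wn: "W n = U n"
  shows "goodR U V W n \<longleftrightarrow> goodR (\<lambda>k. U n - W (n - k)) (\<lambda>k. U n - V (n - k)) (\<lambda>k. U n - U (n - k)) n"
proof
  assume g: "goodR U V W n"
  show "goodR (\<lambda>k. U n - W (n - k)) (\<lambda>k. U n - V (n - k)) (\<lambda>k. U n - U (n - k)) n"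
  proof (rule ccontr)
    assume ng: "\<not> ?thesis"
    have m1: "\<forall>x<n. U n - W (n - x) \<le> U n - W (n - Suc x)"
    proof (intro allI impI)
      fix x assume "x < n"
      then obtain z where z: "n - x = Suc z" "n - Suc x = z" by (intro that[of "n - Suc x"]) auto
      show "U n - W (n - x) \<le> U n - W (n - Suc x)" unfolding z using monoW z by auto
    qed
    have m2: "\<forall>x<n. U n - V (n - x) \<le> U n - V (n - Suc x)"
    proof (intro allI impI)
      fix x assume "x < n"
      then obtain z where z: "n - x = Suc z" "n - Suc x = z" by (intro that[of "n - Suc x"]) auto
      show "U n - V (n - x) \<le> U n - V (n - Suc x)" unfolding z using monoV z by auto
    qed
    from notgood_dual[OF m1 m2 ng]
    have "\<not> goodR (\<lambda>k. U n - W (n - n) - (U n - U (n - (n - k)))) (\<lambda>k. U n - W (n - n) - (U n - V (n - (n - k))))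
        (\<lambda>k. U n - W (n - n) - (U n - W (n - (n - k)))) n" by simp
    moreover have "goodR (\<lambda>k. U n - W (n - n) - (U n - U (n - (n - k)))) (\<lambda>k. U n - W (n - n) - (U n - V (n - (n - k))))
        (\<lambda>k. U n - W (n - n) - (U n - W (n - (n - k)))) n = goodR U V W n"
      by (rule goodR_cong) (auto simp: W0)
    ultimately show False using g by simp
  qed
next
  assume g: "goodR (\<lambda>k. U n - W (n - k)) (\<lambda>k. U n - V (n - k)) (\<lambda>k. U n - U (n - k)) n"
  show "goodR U V W n"
    using notgood_dual[OF monoU monoV] g by blast
qed


lemma goodR_refl: "goodR U V V n"
  unfolding goodR_def by auto

lemma goodR_trans:
  assumes g1: "goodR U V1 V2 n" and g2: "goodR U V2 V3 n"
  shows "goodR U V1 V3 n"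
  unfolding goodR_def
proof (intro allI impI)
  fix p q t assume H: "p < q \<and> q \<le> n \<and> 0 \<le> t \<and> t < U (Suc p) - U p \<and> U q - V3 q \<le> U p - V3 p + t"
  obtain z where z: "p < z" "z \<le> q" "U z - V2 z \<le> U p - V2 p + t"
    using g2[unfolded goodR_def, rule_format, of p q t] H by auto
  obtain z' where z': "p < z'" "z' \<le> z" "U z' - V1 z' \<le> U p - V1 p + t"
    using g1[unfolded goodR_def, rule_format, of p z t] H z by auto
  show "\<exists>k. p < k \<and> k \<le> q \<and> U k - V1 k \<le> U p - V1 p + t"
    using z z' by (intro exI[of _ z']) auto
qed

lemma spush_sound:
  assumes pr: "p < r" "r \<le> n" "U r - V r \<le> U p - V p"
    and mid: "\<And>x. p < x \<Longrightarrow> x < r \<Longrightarrow> U p - V p < U x - V x"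
    and V': "\<And>x. x \<le> n \<Longrightarrow> V' x = (if p \<le> x \<and> x < r then V x - 1 else V x)"
  shows "goodR U V V' n"
  unfolding goodR_def
proof (intro allI impI)
  fix p' q t assume H: "p' < q \<and> q \<le> n \<and> 0 \<le> t \<and> t < U (Suc p') - U p' \<and> U q - V' q \<le> U p' - V' p' + t"
  show "\<exists>k. p' < k \<and> k \<le> q \<and> U k - V k \<le> U p' - V p' + t"
  proof (cases "U q - V q \<le> U p' - V p' + t")
    case True thus ?thesis using H by auto
  next
    case False
    have e1: "V' q = (if p \<le> q \<and> q < r then V q - 1 else V q)" using V' H by auto
    have e2: "V' p' = (if p \<le> p' \<and> p' < r then V p' - 1 else V p')" using V' H by auto
    have c: "p \<le> p' \<and> p' < r \<and> \<not> (p \<le> q \<and> q < r)" using False H e1 e2 by (auto split: if_splits)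
    hence rq: "r \<le> q" using H by auto
    have "U p - V p \<le> U p' - V p'" using mid[of p'] c by (cases "p = p'") auto
    thus ?thesis using rq c pr H by (intro exI[of _ r]) auto
  qed
qed

lemma spush_complete:
  fixes U V W :: "nat \<Rightarrow> int"
  assumes monoV: "\<forall>x<n. V x \<le> V (Suc x)"
    and WV: "\<And>x. x \<le> n \<Longrightarrow> W x \<le> V x"
    and g: "goodR U V W n"
    and p0n: "p0 \<le> n" and Wp0: "W p0 < V p0" and before: "\<And>x. x < p0 \<Longrightarrow> W x = V x"
    and pr: "p0 < r" "r \<le> n" "U r - V r \<le> U p0 - V p0"
    and mid: "\<And>x. p0 < x \<Longrightarrow> x < r \<Longrightarrow> U p0 - V p0 < U x - V x"
    and V': "\<And>x. x \<le> n \<Longrightarrow> V' x = (if p0 \<le> x \<and> x < r then V x - 1 else V x)"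
  shows "(\<forall>x\<le>n. W x \<le> V' x) \<and> goodR U V' W n"
proof -
  define a where "a x = U x - V x" for x
  define s where "s x = U x - W x" for x
  have inner: "W x < V x" if "p0 \<le> x" "x < r" for x
  proof (rule ccontr)
    assume "\<not> ?thesis"
    hence ex: "p0 \<le> x \<and> x < r \<and> \<not> W x < V x" using that by auto
    define k where "k = (LEAST x. p0 \<le> x \<and> x < r \<and> \<not> W x < V x)"
    have k1: "p0 \<le> k \<and> k < r \<and> \<not> W k < V k" unfolding k_def by (rule LeastI[of _ x], rule ex)
    have k2: "W z < V z" if "p0 \<le> z" "z < k" for z
      using not_less_Least[of z "\<lambda>x. p0 \<le> x \<and> x < r \<and> \<not> W x < V x"] that k1
      unfolding k_def[symmetric] by force
    have pk: "p0 < k" using k1 Wp0 by (cases "p0 = k") auto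
    have Wk: "W k = V k" using k1 WV[of k] pr by auto
    have ak: "a p0 < a k" using mid[of k] pk k1 unfolding a_def by auto
    have exz: "p0 \<le> p0 \<and> p0 < k \<and> a p0 < a k" using pk ak by auto
    define p where "p = (GREATEST z. p0 \<le> z \<and> z < k \<and> a z < a k)"
    have p1: "p0 \<le> p \<and> p < k \<and> a p < a k"
      unfolding p_def by (rule GreatestI_nat[of _ p0 k], rule exz, auto)
    have p2: "\<not> a z < a k" if "p < z" "z < k" for z
    proof
      assume "a z < a k"
      hence "z \<le> p" unfolding p_def using that p1
        by (intro Greatest_le_nat[of _ z k]) auto
      thus False using that by auto
    qed
    define t where "t = a k - a p - 1"
    have t0: "0 \<le> t" using p1 unfolding t_def by auto
    have "a k \<le> a (Suc p)"
    proof (cases "Suc p = k")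
      case True thus ?thesis by simp
    next
      case False thus ?thesis using p2[of "Suc p"] p1 by auto
    qed
    moreover have "V p \<le> V (Suc p)" using monoV p1 k1 pr by auto
    ultimately have tD: "t < U (Suc p) - U p" unfolding t_def a_def by auto
    have "W p < V p" using k2[of p] p1 by (cases "p = p0") (auto simp: Wp0)
    hence sk: "U k - W k \<le> U p - W p + t" using Wk unfolding t_def a_def by auto
    obtain z where z: "p < z" "z \<le> k" "U z - V z \<le> U p - V p + t"
      using g[unfolded goodR_def, rule_format, of p k t] p1 k1 pr t0 tD sk by auto
    show False
    proof (cases "z = k")
      case True thus False using z unfolding t_def a_def by auto
    next
      case False thus False using p2[of z] z unfolding t_def a_def by auto
    qed
  qed
  have part1: "\<forall>x\<le>n. W x \<le> V' x"
  proof (intro allI impI)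
    fix x assume x: "x \<le> n"
    show "W x \<le> V' x" using V'[OF x] inner[of x] WV[OF x] by auto
  qed
  have part2: "goodR U V' W n" unfolding goodR_def
  proof (intro allI impI)
    fix p q t assume H: "p < q \<and> q \<le> n \<and> 0 \<le> t \<and> t < U (Suc p) - U p \<and> U q - W q \<le> U p - W p + t"
    obtain z where z: "p < z" "z \<le> q" "U z - V z \<le> U p - V p + t"
      using g[unfolded goodR_def, rule_format, of p q t] H by auto
    show "\<exists>k. p < k \<and> k \<le> q \<and> U k - V' k \<le> U p - V' p + t"
    proof (cases "U z - V' z \<le> U p - V' p + t")
      case True thus ?thesis using z by auto
    next
      case False
      have e1: "V' z = (if p0 \<le> z \<and> z < r then V z - 1 else V z)" using V' H z by auto
      have e2: "V' p = (if p0 \<le> p \<and> p < r then V p - 1 else V p)" using V' H by auto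
      have c: "p0 \<le> z \<and> z < r \<and> \<not> (p0 \<le> p \<and> p < r)" using False z e1 e2 by (auto split: if_splits)
      hence pp0: "p < p0" using z by auto
      have ap: "W p = V p" using before[OF pp0] .
      have az: "U z - V z = U p - V p + t" using False z e1 e2 c by auto
      have ap0z: "U p0 - V p0 \<le> U z - V z" using mid[of z] c by (cases "p0 = z") auto
      show ?thesis
      proof (cases "r \<le> q")
        case True
        have "V' r = V r" using V'[of r] pr by auto
        thus ?thesis using True pr ap0z az pp0 c e2 by (intro exI[of _ r]) auto
      next
        case False
        hence qr: "q < r" "p0 \<le> q" using c z by auto
        have "W q < V q" using inner qr by auto
        moreover have "V' q = V q - 1" using V'[of q] qr H by auto
        ultimately show ?thesis using H qr ap e2 pp0 by (intro exI[of _ q]) auto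
      qed
    qed
  qed
  show ?thesis using part1 part2 by auto
qed


lemma ecount_simps[simp]:
  "ecount [] = 0" "ecount (E # w) = Suc (ecount w)" "ecount (N # w) = ecount w"
  "ecount (xs @ ys) = ecount xs + ecount ys"
  unfolding ecount_def by auto

lemma ncount_simps[simp]:
  "ncount [] = 0" "ncount (N # w) = Suc (ncount w)" "ncount (E # w) = ncount w"
  "ncount (xs @ ys) = ncount xs + ncount ys"
  unfolding ncount_def by auto

lemma ecount_rev[simp]: "ecount (rev w) = ecount w" unfolding ecount_def by (simp add: rev_filter[symmetric])
lemma ncount_rev[simp]: "ncount (rev w) = ncount w" unfolding ncount_def by (simp add: rev_filter[symmetric])

lemma len_count: "length w = ecount w + ncount w"
proof (induction w)
  case Nil thus ?case by simp
next
  case (Cons s w) thus ?case by (cases s) auto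
qed

lemma nabsc_append:
  "nabsc (xs @ ys) y = (if y < ncount xs then nabsc xs y else ecount xs + nabsc ys (y - ncount xs))"
proof (induction xs arbitrary: y)
  case Nil thus ?case by simp
next
  case (Cons s xs)
  show ?case
  proof (cases s)
    case N
    show ?thesis
    proof (cases y)
      case 0 thus ?thesis using N by simp
    next
      case (Suc y') thus ?thesis using N Cons[of y'] by simp
    qed
  next
    case E thus ?thesis using Cons[of y] by simp
  qed
qed

lemma nabsc_le_ecount: "nabsc w y \<le> ecount w"
proof (induction w arbitrary: y)
  case Nil thus ?case by simp
next
  case (Cons s w) thus ?case by (cases s; cases y) (auto simp: le_SucI)
qed

lemma nabsc_ge: "ncount w \<le> y \<Longrightarrow> nabsc w y = ecount w"
proof (induction w arbitrary: y)
  case Nil thus ?case by simp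
next
  case (Cons s w) thus ?case by (cases s; cases y) auto
qed

lemma nabsc_mono: "y \<le> y' \<Longrightarrow> nabsc w y \<le> nabsc w y'"
proof (induction w arbitrary: y y')
  case Nil thus ?case by simp
next
  case (Cons s w) thus ?case by (cases s; cases y; cases y') auto
qed

lemma eheight_le: "eheight w x \<le> ncount w"
proof (induction w arbitrary: x)
  case Nil thus ?case by simp
next
  case (Cons s w) thus ?case by (cases s; cases x) (auto simp: le_SucI)
qed

lemma galois: "y < ncount g \<Longrightarrow> (y < eheight g x \<longleftrightarrow> nabsc g y \<le> x)"
proof (induction g arbitrary: x y)
  case Nil thus ?case by simp
next
  case (Cons s w)
  show ?case
  proof (cases s)
    case N
    show ?thesis
    proof (cases y)
      case 0 thus ?thesis using N by simp
    next
      case (Suc y') thus ?thesis using N Cons.IH[of y' x] Cons.prems by simp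
    qed
  next
    case E
    show ?thesis
    proof (cases x)
      case 0 thus ?thesis using E by simp
    next
      case (Suc x') thus ?thesis using E Cons.IH[of y x'] Cons.prems by simp
    qed
  qed
qed

lemma above_iff:
  assumes "endpoint g' = endpoint g"
  shows "above g' g \<longleftrightarrow> (\<forall>y < ncount g. nabsc g' y \<le> nabsc g y)"
proof -
  have ec: "ecount g' = ecount g" "ncount g' = ncount g" using assms unfolding endpoint_def by auto
  show ?thesis
  proof
    assume ab: "above g' g"
    show "\<forall>y < ncount g. nabsc g' y \<le> nabsc g y"
    proof (intro allI impI, rule ccontr)
      fix y assume y: "y < ncount g" and "\<not> nabsc g' y \<le> nabsc g y"
      hence lt: "nabsc g y < nabsc g' y" by auto
      have "nabsc g' y \<le> ecount g" using nabsc_le_ecount[of g' y] ec by auto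
      hence xl: "nabsc g y < ecount g" using lt by auto
      have "y < eheight g (nabsc g y)" using galois[OF y] by auto
      moreover have "eheight g (nabsc g y) \<le> eheight g' (nabsc g y)" using ab xl unfolding above_def by auto
      ultimately have "y < eheight g' (nabsc g y)" by auto
      hence "nabsc g' y \<le> nabsc g y" using galois[of y g'] y ec by auto
      thus False using lt by auto
    qed
  next
    assume H: "\<forall>y < ncount g. nabsc g' y \<le> nabsc g y"
    show "above g' g" unfolding above_def
    proof (intro conjI allI impI)
      show "endpoint g' = endpoint g" by (rule assms)
      fix x assume "x < ecount g"
      show "eheight g x \<le> eheight g' x"
      proof (rule ccontr)
        assume "\<not> ?thesis"
        hence lt: "eheight g' x < eheight g x" by auto
        define y where "y = eheight g' x"
        have y: "y < ncount g" using lt eheight_le[of g x] unfolding y_def by auto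
        have "nabsc g y \<le> x" using galois[OF y] lt unfolding y_def by auto
        hence "nabsc g' y \<le> x" using H y by force
        hence "y < eheight g' x" using galois[of y g' x] y ec by auto
        thus False unfolding y_def by auto
      qed
    qed
  qed
qed

lemma walk_eq:
  "endpoint g = endpoint g' \<Longrightarrow> (\<forall>y < ncount g. nabsc g y = nabsc g' y) \<Longrightarrow> g = g'"
proof (induction g arbitrary: g')
  case Nil thus ?case using len_count[of g'] unfolding endpoint_def by auto
next
  case (Cons s w)
  show ?case
  proof (cases g')
    case Nil thus ?thesis using Cons.prems unfolding endpoint_def by (cases s) auto
  next
    case (Cons s' w')
    show ?thesis
    proof (cases s; cases s')
      assume "s = N" "s' = N"
      moreover have "w = w'"
      proof (rule Cons.IH)
        show "endpoint w = endpoint w'" using Cons.prems \<open>g' = s' # w'\<close> \<open>s = N\<close> \<open>s' = N\<close>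
          unfolding endpoint_def by auto
        show "\<forall>y<ncount w. nabsc w y = nabsc w' y"
        proof (intro allI impI)
          fix y assume "y < ncount w"
          thus "nabsc w y = nabsc w' y" using Cons.prems(2)[rule_format, of "Suc y"] \<open>g' = s' # w'\<close> \<open>s = N\<close> \<open>s' = N\<close> by auto
        qed
      qed
      ultimately show ?thesis using \<open>g' = s' # w'\<close> by simp
    next
      assume "s = N" "s' = E"
      thus ?thesis using Cons.prems(2)[rule_format, of 0] \<open>g' = s' # w'\<close> by auto
    next
      assume "s = E" "s' = N"
      have "0 < ncount g'" using \<open>g' = s' # w'\<close> \<open>s' = N\<close> by simp
      hence "0 < ncount (s # w)" using Cons.prems(1) unfolding endpoint_def by auto
      thus ?thesis using Cons.prems(2)[rule_format, of 0] \<open>g' = s' # w'\<close> \<open>s = E\<close> \<open>s' = N\<close> by auto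
    next
      assume "s = E" "s' = E"
      moreover have "w = w'"
      proof (rule Cons.IH)
        show "endpoint w = endpoint w'" using Cons.prems \<open>g' = s' # w'\<close> \<open>s = E\<close> \<open>s' = E\<close>
          unfolding endpoint_def by auto
        show "\<forall>y<ncount w. nabsc w y = nabsc w' y"
        proof (intro allI impI)
          fix y assume "y < ncount w"
          thus "nabsc w y = nabsc w' y" using Cons.prems(2)[rule_format, of y] \<open>g' = s' # w'\<close> \<open>s = E\<close> \<open>s' = E\<close> by auto
        qed
      qed
      ultimately show ?thesis using \<open>g' = s' # w'\<close> by simp
    qed
  qed
qed

lemma nabsc_rev: "y < ncount g \<Longrightarrow> nabsc (rev g) y = ecount g - nabsc g (ncount g - 1 - y)"
proof (induction g arbitrary: y)
  case Nil thus ?case by simp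
next
  case (Cons s w)
  show ?case
  proof (cases s)
    case E
    have "nabsc (rev w @ [E]) y = nabsc (rev w) y" using Cons.prems E by (simp add: nabsc_append)
    also have "\<dots> = ecount w - nabsc w (ncount w - 1 - y)" using Cons E by simp
    finally show ?thesis using E nabsc_le_ecount[of w "ncount w - 1 - y"] by simp
  next
    case N
    show ?thesis
    proof (cases "y < ncount w")
      case True
      have "nabsc (rev w @ [N]) y = nabsc (rev w) y" using True by (simp add: nabsc_append)
      also have "\<dots> = ecount w - nabsc w (ncount w - 1 - y)" using Cons True by simp
      also have "\<dots> = ecount (N # w) - nabsc (N # w) (ncount (N # w) - 1 - y)"
      proof -
        have "ncount (N # w) - 1 - y = Suc (ncount w - 1 - y)" using True by simp
        thus ?thesis by simp
      qed
      finally show ?thesis using N by simp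
    next
      case False
      hence y: "y = ncount w" using Cons.prems N by simp
      show ?thesis using N y by (simp add: nabsc_append)
    qed
  qed
qed


definition nbi :: "walk \<Rightarrow> nat \<Rightarrow> int" where
  "nbi w x = (if x = 0 then 0 else int (nabsc w (x - 1)))"

lemma nbi_0[simp]: "nbi w 0 = 0" unfolding nbi_def by simp
lemma nbi_Suc[simp]: "nbi w (Suc y) = int (nabsc w y)" unfolding nbi_def by simp

lemma nbi_mono: "nbi w x \<le> nbi w (Suc x)"
  by (cases x) (auto simp: nabsc_mono)

lemma nbi_top: "endpoint w = (i, j) \<Longrightarrow> nbi w (Suc j) = int i"
  using nabsc_ge[of w j] unfolding endpoint_def by auto

lemma above_nbi:
  assumes "endpoint g' = (i, j)" "endpoint g = (i, j)"
  shows "above g' g \<longleftrightarrow> (\<forall>x. nbi g' x \<le> nbi g x)"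
proof -
  have nc: "ncount g = j" "ncount g' = j" "ecount g = i" "ecount g' = i" using assms unfolding endpoint_def by auto
  have "above g' g \<longleftrightarrow> (\<forall>y < j. nabsc g' y \<le> nabsc g y)" using above_iff[of g' g] assms nc by auto
  also have "\<dots> \<longleftrightarrow> (\<forall>x. nbi g' x \<le> nbi g x)"
  proof
    assume H: "\<forall>y < j. nabsc g' y \<le> nabsc g y"
    show "\<forall>x. nbi g' x \<le> nbi g x"
    proof
      fix x show "nbi g' x \<le> nbi g x"
      proof (cases x)
        case 0 thus ?thesis by simp
      next
        case (Suc y)
        show ?thesis
        proof (cases "y < j")
          case True thus ?thesis using H Suc by auto
        next
          case False thus ?thesis using Suc nabsc_ge[of g y] nabsc_ge[of g' y] nc by auto
        qed
      qed
    qed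
  next
    assume H: "\<forall>x. nbi g' x \<le> nbi g x"
    show "\<forall>y < j. nabsc g' y \<le> nabsc g y"
      using H by (metis nbi_Suc of_nat_le_iff)
  qed
  finally show ?thesis .
qed

lemma take_Suc_app: "m < length g \<Longrightarrow> take (Suc m) g = take m g @ [g ! m]"
  by (rule take_Suc_conv_app_nth)

lemma nabsc_at_N:
  assumes "m < length g" "g ! m = N"
  shows "nabsc g (ncount (take m g)) = ecount (take m g)"
proof -
  have eq: "g = take m g @ N # drop (Suc m) g" using id_take_nth_drop[OF assms(1)] assms(2) by simp
  have "nabsc g (ncount (take m g)) = nabsc (take m g @ N # drop (Suc m) g) (ncount (take m g))"
    by (rule arg_cong[where f="\<lambda>w. nabsc w (ncount (take m g))", OF eq])
  also have "\<dots> = ecount (take m g)" by (simp only: nabsc_append) simp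
  finally show ?thesis .
qed

lemma split_take_drop: "nabsc g y = nabsc (take m g @ drop m g) y"
  by simp

lemma ecount_take_le: "ecount (take m g) \<le> nabsc g (ncount (take m g))"
proof -
  have "nabsc (take m g @ drop m g) (ncount (take m g)) = ecount (take m g) + nabsc (drop m g) 0"
    by (simp only: nabsc_append) simp
  thus ?thesis by simp
qed

lemma nabsc_before: "y < ncount (take m g) \<Longrightarrow> nabsc g y \<le> ecount (take m g)"
proof -
  assume y: "y < ncount (take m g)"
  have "nabsc (take m g @ drop m g) y = nabsc (take m g) y" using y by (simp only: nabsc_append) simp
  thus ?thesis using nabsc_le_ecount[of "take m g" y] by simp
qed

lemma ncount_take_le: "ncount (take m g) \<le> ncount g"
proof -
  have "ncount (take m g @ drop m g) = ncount (take m g) + ncount (drop m g)" by (simp only: ncount_simps)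
  thus ?thesis by simp
qed

lemma ivt_N:
  "a \<le> b \<Longrightarrow> b \<le> length g \<Longrightarrow> ncount (take a g) \<le> y \<Longrightarrow> y < ncount (take b g) \<Longrightarrow>
    \<exists>m. a \<le> m \<and> m < b \<and> ncount (take m g) = y \<and> g ! m = N"
proof (induction b)
  case 0 thus ?case by simp
next
  case (Suc b)
  show ?case
  proof (cases "a \<le> b \<and> y < ncount (take b g)")
    case True thus ?thesis using Suc by force
  next
    case False
    have tb: "take (Suc b) g = take b g @ [g ! b]" using Suc.prems by (intro take_Suc_app) auto
    show ?thesis
    proof (cases "a = Suc b")
      case True thus ?thesis using Suc.prems by auto
    next
      case a: False
      hence "a \<le> b" using Suc.prems by auto
      hence ge: "ncount (take b g) \<le> y" using False by auto
      have "g ! b = N \<and> y = ncount (take b g)"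
        using Suc.prems(4) ge unfolding tb by (cases "g ! b") auto
      thus ?thesis using \<open>a \<le> b\<close> by (intro exI[of _ b]) auto
    qed
  qed
qed

lemma ell_eq: "ell \<nu> g m = int (nabsc \<nu> (ncount (take m g))) - int (ecount (take m g))"
  unfolding ell_def pt_def endpoint_def using nabsc_ge[of \<nu> "ncount \<nu>"] by (auto simp: Let_def)

lemma ell_step:
  assumes "m < length g"
  shows "ell \<nu> g m - 1 \<le> ell \<nu> g (Suc m)"
proof -
  have tb: "take (Suc m) g = take m g @ [g ! m]" using assms by (rule take_Suc_app)
  show ?thesis
  proof (cases "g ! m")
    case N
    have "nabsc \<nu> (ncount (take m g)) \<le> nabsc \<nu> (Suc (ncount (take m g)))" by (rule nabsc_mono) simp
    thus ?thesis unfolding ell_eq tb using N by simp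
  next
    case E thus ?thesis unfolding ell_eq tb by simp
  qed
qed

lemma ivt_down:
  fixes f :: "nat \<Rightarrow> int"
  shows "a \<le> b \<Longrightarrow> L \<le> f a \<Longrightarrow> f b \<le> L \<Longrightarrow> (\<forall>m. a \<le> m \<and> m < b \<longrightarrow> f m - 1 \<le> f (Suc m)) \<Longrightarrow>
    \<exists>m. a \<le> m \<and> m \<le> b \<and> f m = L"
proof (induction b)
  case 0 thus ?case by auto
next
  case (Suc b)
  show ?case
  proof (cases "a = Suc b")
    case True thus ?thesis using Suc.prems by auto
  next
    case False
    hence ab: "a \<le> b" using Suc.prems by auto
    show ?thesis
    proof (cases "f b \<le> L")
      case True thus ?thesis using Suc ab by force
    next
      case False
      have "f b - 1 \<le> f (Suc b)" using Suc.prems ab by auto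
      hence "f (Suc b) = L" using False Suc.prems by auto
      thus ?thesis using ab by (intro exI[of _ "Suc b"]) auto
    qed
  qed
qed

definition pcond :: "walk \<Rightarrow> walk \<Rightarrow> nat \<Rightarrow> nat \<Rightarrow> bool" where
  "pcond \<nu> g k k' \<longleftrightarrow> 0 < k \<and> k < length g \<and> g ! (k - 1) = E \<and> g ! k = N \<and>
      k < k' \<and> k' \<le> length g \<and> ell \<nu> g k' = ell \<nu> g k \<and>
      (\<forall>m. k < m \<and> m < k' \<longrightarrow> ell \<nu> g m \<noteq> ell \<nu> g k)"

definition mk :: "walk \<Rightarrow> nat \<Rightarrow> nat \<Rightarrow> walk" where
  "mk g k k' = take (k - 1) g @ drop k (take k' g) @ [E] @ drop k' g"

lemma push_iff: "push \<nu> g h \<longleftrightarrow> (\<exists>k k'. pcond \<nu> g k k' \<and> h = mk g k k')"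
  unfolding push_def pcond_def mk_def by blast

lemma nabsc_swap:
  "nabsc (A @ B @ E # C) y = (if ncount A \<le> y \<and> y < ncount A + ncount B then nabsc (A @ E # B @ C) y - 1 else nabsc (A @ E # B @ C) y)"
  by (auto simp add: nabsc_append)

lemma nabsc_swap_pos:
  "ncount A \<le> y \<Longrightarrow> 1 \<le> nabsc (A @ E # B @ C) y"
  by (simp add: nabsc_append)


lemma push_analysis:
  assumes en: "endpoint \<nu> = (i, j)" "endpoint g = (i, j)" and ab: "above g \<nu>" and pc: "pcond \<nu> g k k'"
  shows "\<exists>r. 0 < Suc (ncount (take (k - 1) g)) \<and> Suc (ncount (take (k - 1) g)) < Suc j \<and>
     nbi g (Suc (ncount (take (k - 1) g)) - 1) < nbi g (Suc (ncount (take (k - 1) g))) \<and>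
     Suc (ncount (take (k - 1) g)) < r \<and> r \<le> Suc j \<and>
     nbi \<nu> r - nbi g r \<le> nbi \<nu> (Suc (ncount (take (k - 1) g))) - nbi g (Suc (ncount (take (k - 1) g))) \<and>
     (\<forall>x. Suc (ncount (take (k - 1) g)) < x \<and> x < r \<longrightarrow>
        nbi \<nu> (Suc (ncount (take (k - 1) g))) - nbi g (Suc (ncount (take (k - 1) g))) < nbi \<nu> x - nbi g x) \<and>
     (\<forall>x. nbi (mk g k k') x = (if Suc (ncount (take (k - 1) g)) \<le> x \<and> x < r then nbi g x - 1 else nbi g x)) \<and>
     endpoint (mk g k k') = (i, j)"
proof -
  have k: "0 < k" "k < length g" "g ! (k - 1) = E" "g ! k = N" "k < k'" "k' \<le> length g"
    "ell \<nu> g k' = ell \<nu> g k" "\<And>m. k < m \<Longrightarrow> m < k' \<Longrightarrow> ell \<nu> g m \<noteq> ell \<nu> g k"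
    using pc unfolding pcond_def by auto
  define A where "A = take (k - 1) g"
  define B where "B = drop k (take k' g)"
  define C where "C = drop k' g"
  define y0 where "y0 = ncount A"
  define x0 where "x0 = ecount A"
  define p where "p = Suc y0"
  have nc: "ncount g = j" "ecount g = i" "ncount \<nu> = j" "ecount \<nu> = i" using en unfolding endpoint_def by auto
  have tk: "take k g = A @ [E]"
  proof -
    have "take (Suc (k - 1)) g = take (k - 1) g @ [g ! (k - 1)]" using k by (intro take_Suc_app) auto
    thus ?thesis using k unfolding A_def by simp
  qed
  have tk': "take k' g = A @ E # B"
  proof -
    have "take k' g = take k (take k' g) @ drop k (take k' g)" by (rule append_take_drop_id[symmetric])
    also have "take k (take k' g) = take k g" using k by (simp add: min_def)
    finally show ?thesis using tk unfolding B_def by simp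
  qed
  have dec: "g = A @ E # B @ C"
  proof -
    have "g = take k' g @ drop k' g" by simp
    thus ?thesis using tk' unfolding C_def by simp
  qed
  have hdef: "mk g k k' = A @ B @ E # C" unfolding mk_def A_def B_def C_def by simp
  have Bhd: "B = N # drop (Suc k) (take k' g)"
  proof -
    have "k < length (take k' g)" using k by simp
    hence "drop k (take k' g) = take k' g ! k # drop (Suc k) (take k' g)" by (rule Cons_nth_drop_Suc[symmetric])
    moreover have "take k' g ! k = N" using k by simp
    ultimately show ?thesis unfolding B_def by simp
  qed
  have nB: "1 \<le> ncount B" using Bhd by simp
  define y' where "y' = ncount (take k' g)"
  have y'eq: "y' = y0 + ncount B" unfolding y'_def y0_def using tk' by simp
  have y'j: "y' \<le> j" unfolding y'_def using ncount_take_le[of k' g] nc by simp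
  have tkn: "ncount (take k g) = y0" "ecount (take k g) = Suc x0" using tk unfolding y0_def x0_def by auto
  have ngy0: "nabsc g y0 = Suc x0" using nabsc_at_N[of k g] k tkn by simp
  have pA: "ncount (take (k - 1) g) = y0" unfolding y0_def A_def by simp
  have above_k: "ell \<nu> g k < ell \<nu> g (Suc k + d)" if "Suc k + d < k'" for d
    using that
  proof (induction d)
    case 0
    have tb: "take (Suc k) g = take k g @ [N]" using take_Suc_app[of k g] k by simp
    have "nabsc \<nu> (ncount (take k g)) \<le> nabsc \<nu> (Suc (ncount (take k g)))" by (rule nabsc_mono) simp
    hence "ell \<nu> g k \<le> ell \<nu> g (Suc k)" unfolding ell_eq tb by simp
    moreover have "ell \<nu> g (Suc k) \<noteq> ell \<nu> g k" using k(8)[of "Suc k"] 0 by simp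
    ultimately show ?case by simp
  next
    case (Suc d)
    have "ell \<nu> g (Suc k + d) - 1 \<le> ell \<nu> g (Suc (Suc k + d))" using Suc.prems k by (intro ell_step) auto
    moreover have "ell \<nu> g k < ell \<nu> g (Suc k + d)" using Suc by auto
    moreover have "ell \<nu> g (Suc (Suc k + d)) \<noteq> ell \<nu> g k" using k(8)[of "Suc (Suc k + d)"] Suc.prems by simp
    ultimately show ?case by simp
  qed
  have above_k': "ell \<nu> g k < ell \<nu> g m" if "k < m" "m < k'" for m
    using above_k[of "m - Suc k"] that by simp
  have ellk: "ell \<nu> g k = nbi \<nu> p - nbi g p"
    unfolding ell_eq p_def using tkn ngy0 by simp
  show ?thesis
  proof (intro exI[of _ "Suc y'"] conjI)
    show "0 < Suc (ncount (take (k - 1) g))" by simp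
    show "Suc (ncount (take (k - 1) g)) < Suc j" using pA y'eq y'j nB by simp
    show "nbi g (Suc (ncount (take (k - 1) g)) - 1) < nbi g (Suc (ncount (take (k - 1) g)))"
    proof (cases y0)
      case 0 thus ?thesis using pA ngy0 by simp
    next
      case (Suc z)
      have "z < ncount (take (k - 1) g)" using pA Suc by simp
      hence "nabsc g z \<le> ecount (take (k - 1) g)" by (rule nabsc_before)
      thus ?thesis using pA Suc ngy0 unfolding x0_def A_def by simp
    qed
    show "Suc (ncount (take (k - 1) g)) < Suc y'" using pA y'eq nB by simp
    show "Suc y' \<le> Suc j" using y'j by simp
    have "ecount (take k' g) \<le> nabsc g y'" using ecount_take_le[of k' g] unfolding y'_def .
    hence "nbi \<nu> (Suc y') - nbi g (Suc y') \<le> ell \<nu> g k'" unfolding ell_eq y'_def by simp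
    thus "nbi \<nu> (Suc y') - nbi g (Suc y') \<le> nbi \<nu> (Suc (ncount (take (k - 1) g))) - nbi g (Suc (ncount (take (k - 1) g)))"
      using k(7) ellk pA unfolding p_def by simp
    show "\<forall>x. Suc (ncount (take (k - 1) g)) < x \<and> x < Suc y' \<longrightarrow>
        nbi \<nu> (Suc (ncount (take (k - 1) g))) - nbi g (Suc (ncount (take (k - 1) g))) < nbi \<nu> x - nbi g x"
    proof (intro allI impI)
      fix x assume x: "Suc (ncount (take (k - 1) g)) < x \<and> x < Suc y'"
      then obtain y where y: "x = Suc y" "y0 < y" "y < y'" using pA by (cases x) auto
      have tb: "take (Suc k) g = take k g @ [N]" using take_Suc_app[of k g] k by simp
      have "ncount (take (Suc k) g) \<le> y" using tb tkn y by simp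
      then obtain m where m: "Suc k \<le> m" "m < k'" "ncount (take m g) = y" "g ! m = N"
        using ivt_N[of "Suc k" k' g y] k y unfolding y'_def by auto
      have "nabsc g y = ecount (take m g)" using nabsc_at_N[of m g] m k by simp
      hence "ell \<nu> g m = nbi \<nu> x - nbi g x" unfolding ell_eq using m y by simp
      moreover have "ell \<nu> g k < ell \<nu> g m" using above_k' m by simp
      ultimately show "nbi \<nu> (Suc (ncount (take (k - 1) g))) - nbi g (Suc (ncount (take (k - 1) g))) < nbi \<nu> x - nbi g x"
        using ellk pA unfolding p_def by simp
    qed
    show "\<forall>x. nbi (mk g k k') x = (if Suc (ncount (take (k - 1) g)) \<le> x \<and> x < Suc y' then nbi g x - 1 else nbi g x)"
    proof
      fix x show "nbi (mk g k k') x = (if Suc (ncount (take (k - 1) g)) \<le> x \<and> x < Suc y' then nbi g x - 1 else nbi g x)"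
      proof (cases x)
        case 0 thus ?thesis by simp
      next
        case (Suc y)
        have e: "nabsc (mk g k k') y = (if ncount A \<le> y \<and> y < ncount A + ncount B then nabsc g y - 1 else nabsc g y)"
          unfolding hdef using nabsc_swap[of A B C y] dec by simp
        have pos: "ncount A \<le> y \<Longrightarrow> 1 \<le> nabsc g y" using nabsc_swap_pos[of A y B C] dec by simp
        show ?thesis using e pos Suc pA y'eq unfolding y0_def by (auto simp: of_nat_diff)
      qed
    qed
    show "endpoint (mk g k k') = (i, j)"
    proof -
      have "ecount (A @ B @ E # C) = ecount (A @ E # B @ C)" "ncount (A @ B @ E # C) = ncount (A @ E # B @ C)"
        by simp_all
      hence "ecount (mk g k k') = ecount g" "ncount (mk g k k') = ncount g"
        unfolding hdef using dec by simp_all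
      thus ?thesis using en unfolding endpoint_def by simp
    qed
  qed
qed

lemma push_exists:
  assumes en: "endpoint \<nu> = (i, j)" "endpoint g = (i, j)" and ab: "above g \<nu>"
    and p: "0 < p" "p < Suc j" "nbi g (p - 1) < nbi g p"
  shows "\<exists>k k'. pcond \<nu> g k k' \<and> Suc (ncount (take (k - 1) g)) = p"
proof -
  have nc: "ncount g = j" "ecount g = i" "ncount \<nu> = j" "ecount \<nu> = i" using en unfolding endpoint_def by auto
  define y0 where "y0 = p - 1"
  have y0j: "y0 < j" using p unfolding y0_def by auto
  obtain k where k: "k < length g" "ncount (take k g) = y0" "g ! k = N"
    using ivt_N[of 0 "length g" g y0] y0j nc by auto
  have ngk: "nabsc g y0 = ecount (take k g)" using nabsc_at_N[of k g] k by simp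
  have nbp: "nbi g p = int (ecount (take k g))" using ngk p unfolding y0_def by (cases p) auto
  have nbp1: "0 \<le> nbi g (p - 1)" unfolding nbi_def by auto
  have k0: "0 < k"
  proof (rule ccontr)
    assume "\<not> 0 < k" hence "k = 0" by simp
    thus False using nbp nbp1 p by simp
  qed
  have tk: "take k g = take (k - 1) g @ [g ! (k - 1)]"
    using take_Suc_app[of "k - 1" g] k k0 by simp
  have kE: "g ! (k - 1) = E"
  proof (rule ccontr)
    assume "g ! (k - 1) \<noteq> E"
    hence kN: "g ! (k - 1) = N" by (cases "g ! (k - 1)") auto
    hence c: "ncount (take (k - 1) g) = y0 - 1" "1 \<le> y0" "ecount (take (k - 1) g) = ecount (take k g)"
      using tk k by auto
    have "nabsc g (ncount (take (k - 1) g)) = ecount (take (k - 1) g)"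
      using nabsc_at_N[of "k - 1" g] kN k by simp
    hence "nabsc g (y0 - 1) = nabsc g y0" using c ngk by simp
    moreover have "nbi g (p - 1) = int (nabsc g (y0 - 1))"
    proof -
      have "p - 1 = Suc (y0 - 1)" using c unfolding y0_def by simp
      thus ?thesis by simp
    qed
    moreover have "nbi g p = int (nabsc g y0)" using ngk nbp by simp
    ultimately show False using p by simp
  qed
  have pA: "ncount (take (k - 1) g) = y0" using tk kE k by simp
  define L where "L = ell \<nu> g k"
  have L0: "0 \<le> L"
  proof -
    have "nabsc g y0 \<le> nabsc \<nu> y0" using above_iff[of g \<nu>] ab en y0j nc by auto
    thus ?thesis unfolding L_def ell_eq using k ngk by simp
  qed
  have tb: "take (Suc k) g = take k g @ [N]" using take_Suc_app[of k g] k by simp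
  have L1: "L \<le> ell \<nu> g (Suc k)"
  proof -
    have "nabsc \<nu> (ncount (take k g)) \<le> nabsc \<nu> (Suc (ncount (take k g)))" by (rule nabsc_mono) simp
    thus ?thesis unfolding L_def ell_eq tb by simp
  qed
  have Lend: "ell \<nu> g (length g) = 0"
    unfolding ell_eq using nc nabsc_ge[of \<nu> j] by simp
  obtain m where m: "Suc k \<le> m" "m \<le> length g" "ell \<nu> g m = L"
    using ivt_down[of "Suc k" "length g" L "ell \<nu> g"] k L1 Lend L0 ell_step[of _ g \<nu>] by auto
  define k' where "k' = (LEAST m. k < m \<and> m \<le> length g \<and> ell \<nu> g m = ell \<nu> g k)"
  have exm: "k < m \<and> m \<le> length g \<and> ell \<nu> g m = ell \<nu> g k" using m unfolding L_def by auto
  have k'1: "k < k' \<and> k' \<le> length g \<and> ell \<nu> g k' = ell \<nu> g k"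
    unfolding k'_def by (rule LeastI[of _ m], rule exm)
  have k'2: "ell \<nu> g z \<noteq> ell \<nu> g k" if "k < z" "z < k'" for z
    using not_less_Least[of z "\<lambda>m. k < m \<and> m \<le> length g \<and> ell \<nu> g m = ell \<nu> g k"] that k'1
    unfolding k'_def[symmetric] by auto
  have "pcond \<nu> g k k'" unfolding pcond_def using k0 k kE k'1 k'2 by auto
  thus ?thesis using pA p unfolding y0_def by (intro exI[of _ k] exI[of _ k']) auto
qed


lemma nbi_big: "endpoint w = (i, j) \<Longrightarrow> Suc j \<le> x \<Longrightarrow> nbi w x = int i"
  using nabsc_ge[of w "x - 1"] unfolding endpoint_def nbi_def by auto

lemma wset_iff: "g \<in> Wset \<nu> \<longleftrightarrow> above g \<nu>" unfolding Wset_def by simp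

lemma above_endpoint: "above g \<nu> \<Longrightarrow> endpoint g = endpoint \<nu>" unfolding above_def by simp

lemma tam_sound:
  assumes en: "endpoint \<nu> = (i, j)"
    and st: "(\<lambda>a b. a \<in> Wset \<nu> \<and> b \<in> Wset \<nu> \<and> push \<nu> a b)\<^sup>*\<^sup>* g g'"
  shows "goodR (nbi \<nu>) (nbi g) (nbi g') (Suc j)"
  using st
proof (induction rule: rtranclp_induct)
  case base thus ?case by (rule goodR_refl)
next
  case (step b c)
  have bW: "above b \<nu>" and pbc: "push \<nu> b c" using step.hyps by (auto simp: wset_iff)
  have enb: "endpoint b = (i, j)" using above_endpoint[OF bW] en by simp
  obtain k k' where kk: "pcond \<nu> b k k'" "c = mk b k k'" using pbc push_iff by blast
  obtain r where r: "Suc (ncount (take (k - 1) b)) < r" "r \<le> Suc j"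
    "nbi \<nu> r - nbi b r \<le> nbi \<nu> (Suc (ncount (take (k - 1) b))) - nbi b (Suc (ncount (take (k - 1) b)))"
    "\<forall>x. Suc (ncount (take (k - 1) b)) < x \<and> x < r \<longrightarrow>
        nbi \<nu> (Suc (ncount (take (k - 1) b))) - nbi b (Suc (ncount (take (k - 1) b))) < nbi \<nu> x - nbi b x"
    "\<forall>x. nbi (mk b k k') x = (if Suc (ncount (take (k - 1) b)) \<le> x \<and> x < r then nbi b x - 1 else nbi b x)"
    using push_analysis[OF en enb bW kk(1)] by blast
  have "goodR (nbi \<nu>) (nbi b) (nbi c) (Suc j)"
    using spush_sound[of "Suc (ncount (take (k - 1) b))" r "Suc j" "nbi \<nu>" "nbi b" "nbi c"] r kk(2) by auto
  thus ?case using goodR_trans step.IH by blast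
qed

lemma tam_complete:
  assumes en: "endpoint \<nu> = (i, j)" "endpoint g' = (i, j)"
  shows "endpoint g = (i, j) \<Longrightarrow> above g \<nu> \<Longrightarrow> above g' g \<Longrightarrow> goodR (nbi \<nu>) (nbi g) (nbi g') (Suc j) \<Longrightarrow>
    (\<lambda>a b. a \<in> Wset \<nu> \<and> b \<in> Wset \<nu> \<and> push \<nu> a b)\<^sup>*\<^sup>* g g'"
proof (induction "\<Sum>y<j. nabsc g y - nabsc g' y" arbitrary: g rule: less_induct)
  case less
  note eng = less.prems(1) and gW = less.prems(2) and g'g = less.prems(3) and good = less.prems(4)
  have nc: "ncount g = j" "ncount g' = j" "ecount g = i" "ecount g' = i" using eng en unfolding endpoint_def by auto
  have le: "\<forall>x. nbi g' x \<le> nbi g x" using above_nbi[OF en(2) eng] g'g by simp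
  have leg: "\<forall>x. nbi g x \<le> nbi \<nu> x" using above_nbi[OF eng en(1)] gW by simp
  show ?case
  proof (cases "\<forall>y<j. nabsc g y = nabsc g' y")
    case True
    hence "g = g'" using walk_eq[of g g'] eng en nc by auto
    thus ?thesis by simp
  next
    case False
    then obtain y where y: "y < j" "nabsc g y \<noteq> nabsc g' y" by auto
    have "nbi g' (Suc y) < nbi g (Suc y)" using le[rule_format, of "Suc y"] y by auto
    hence exx: "nbi g' (Suc y) < nbi g (Suc y)" .
    define p0 where "p0 = (LEAST x. nbi g' x < nbi g x)"
    have p01: "nbi g' p0 < nbi g p0" unfolding p0_def by (rule LeastI[of _ "Suc y"], rule exx)
    have p02: "p0 \<le> Suc y" unfolding p0_def by (rule Least_le, rule exx)
    have before: "nbi g' x = nbi g x" if "x < p0" for x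
      using not_less_Least[of x "\<lambda>x. nbi g' x < nbi g x"] that le unfolding p0_def[symmetric]
      by (meson antisym_conv2)
    have p0pos: "0 < p0" using p01 by (cases p0) auto
    have valley: "nbi g (p0 - 1) < nbi g p0"
    proof -
      have "nbi g' (p0 - 1) \<le> nbi g' (Suc (p0 - 1))" by (rule nbi_mono)
      thus ?thesis using before[of "p0 - 1"] p0pos p01 by simp
    qed
    have p0j: "p0 < Suc j" using p02 y by simp
    obtain k k' where kk: "pcond \<nu> g k k'" "Suc (ncount (take (k - 1) g)) = p0"
      using push_exists[OF en(1) eng gW p0pos p0j valley] by blast
    define h where "h = mk g k k'"
    obtain r where r: "p0 < r" "r \<le> Suc j"
      "nbi \<nu> r - nbi g r \<le> nbi \<nu> p0 - nbi g p0"
      "\<forall>x. p0 < x \<and> x < r \<longrightarrow> nbi \<nu> p0 - nbi g p0 < nbi \<nu> x - nbi g x"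
      "\<forall>x. nbi h x = (if p0 \<le> x \<and> x < r then nbi g x - 1 else nbi g x)"
      "endpoint h = (i, j)"
      using push_analysis[OF en(1) eng gW kk(1)] kk(2) unfolding h_def by auto
    have sc: "(\<forall>x\<le>Suc j. nbi g' x \<le> nbi h x) \<and> goodR (nbi \<nu>) (nbi h) (nbi g') (Suc j)"
    proof (rule spush_complete[of "Suc j" "nbi g" "nbi g'" "nbi \<nu>" p0 r "nbi h"])
      show "\<forall>x<Suc j. nbi g x \<le> nbi g (Suc x)" using nbi_mono by auto
      show "\<And>x. x \<le> Suc j \<Longrightarrow> nbi g' x \<le> nbi g x" using le by auto
      show "goodR (nbi \<nu>) (nbi g) (nbi g') (Suc j)" by (rule good)
      show "p0 \<le> Suc j" using p0j by simp
      show "nbi g' p0 < nbi g p0" by (rule p01)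
      show "\<And>x. x < p0 \<Longrightarrow> nbi g' x = nbi g x" by (rule before)
      show "p0 < r" "r \<le> Suc j" "nbi \<nu> r - nbi g r \<le> nbi \<nu> p0 - nbi g p0" using r by auto
      show "\<And>x. p0 < x \<Longrightarrow> x < r \<Longrightarrow> nbi \<nu> p0 - nbi g p0 < nbi \<nu> x - nbi g x" using r by auto
      show "\<And>x. x \<le> Suc j \<Longrightarrow> nbi h x = (if p0 \<le> x \<and> x < r then nbi g x - 1 else nbi g x)" using r by auto
    qed
    have hg: "\<forall>x. nbi h x \<le> nbi g x" using r(5) by auto
    have hW: "above h \<nu>" using above_nbi[OF r(6) en(1)] hg leg by (meson order_trans)
    have g'h: "above g' h"
    proof -
      have "\<forall>x. nbi g' x \<le> nbi h x"
      proof
        fix x show "nbi g' x \<le> nbi h x"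
        proof (cases "x \<le> Suc j")
          case True thus ?thesis using sc by auto
        next
          case False thus ?thesis using nbi_big[OF en(2), of x] nbi_big[OF r(6), of x] by auto
        qed
      qed
      thus ?thesis using above_nbi[OF en(2) r(6)] by simp
    qed
    have meas: "(\<Sum>y<j. nabsc h y - nabsc g' y) < (\<Sum>y<j. nabsc g y - nabsc g' y)"
    proof (rule sum_strict_mono_ex1)
      show "finite {..<j}" by simp
      show "\<forall>x\<in>{..<j}. nabsc h x - nabsc g' x \<le> nabsc g x - nabsc g' x"
      proof
        fix x assume "x \<in> {..<j}"
        have "nbi h (Suc x) \<le> nbi g (Suc x)" using hg by blast
        thus "nabsc h x - nabsc g' x \<le> nabsc g x - nabsc g' x" by simp
      qed
      have a1: "nbi h p0 = nbi g p0 - 1" using r by auto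
      have a2: "nbi g' p0 \<le> nbi h p0" using sc p0j by auto
      have "nabsc h (p0 - 1) - nabsc g' (p0 - 1) < nabsc g (p0 - 1) - nabsc g' (p0 - 1)"
        using a1 a2 p0pos by (cases p0) auto
      thus "\<exists>a\<in>{..<j}. nabsc h a - nabsc g' a < nabsc g a - nabsc g' a"
        using p0j p0pos by (intro bexI[of _ "p0 - 1"]) auto
    qed
    have "(\<lambda>a b. a \<in> Wset \<nu> \<and> b \<in> Wset \<nu> \<and> push \<nu> a b)\<^sup>*\<^sup>* h g'"
      using less.hyps[OF meas r(6) hW g'h] sc by blast
    moreover have "push \<nu> g h" using push_iff kk unfolding h_def by blast
    ultimately show ?thesis using gW hW
      by (intro converse_rtranclp_into_rtranclp[of _ g h]) (auto simp: wset_iff)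
  qed
qed

lemma above_trans_nbi:
  assumes "endpoint a = (i, j)" "endpoint b = (i, j)" "endpoint c = (i, j)" "above a b" "above b c"
  shows "above a c"
  using above_nbi[OF assms(1) assms(2)] above_nbi[OF assms(2) assms(3)] above_nbi[OF assms(1) assms(3)] assms(4,5)
  by (meson order_trans)

lemma tam_char:
  assumes en: "endpoint \<nu> = (i, j)" "endpoint g = (i, j)" "endpoint g' = (i, j)"
    and ab: "above g \<nu>" "above g' g"
  shows "tam_le \<nu> g g' \<longleftrightarrow> goodR (nbi \<nu>) (nbi g) (nbi g') (Suc j)"
proof -
  have "above g' \<nu>" using above_trans_nbi[OF en(3) en(2) en(1) ab(2) ab(1)] .
  hence W: "g \<in> Wset \<nu>" "g' \<in> Wset \<nu>" using ab by (auto simp: wset_iff)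
  show ?thesis
    unfolding tam_le_def using W tam_sound[OF en(1)] tam_complete[OF en(1) en(3) en(2) ab] by blast
qed

lemma endpoint_rev[simp]: "endpoint (rev w) = endpoint w" unfolding endpoint_def by simp

lemma nbi_rev:
  assumes en: "endpoint g = (i, j)" and x: "x \<le> Suc j"
  shows "nbi (rev g) x = int i - nbi g (Suc j - x)"
proof -
  have nc: "ncount g = j" "ecount g = i" using en unfolding endpoint_def by auto
  show ?thesis
  proof (cases x)
    case 0 thus ?thesis using nbi_top[OF en] by simp
  next
    case (Suc y)
    show ?thesis
    proof (cases "y < j")
      case True
      have "nabsc (rev g) y = i - nabsc g (j - 1 - y)" using nabsc_rev[of y g] True nc by simp
      moreover have "Suc j - x = Suc (j - 1 - y)" using Suc True by simp
      moreover have "nabsc g (j - 1 - y) \<le> i" using nabsc_le_ecount[of g] nc by simp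
      ultimately show ?thesis using Suc by (simp add: of_nat_diff)
    next
      case False
      hence "y = j" using Suc x by simp
      thus ?thesis using Suc nabsc_ge[of "rev g" j] nc by simp
    qed
  qed
qed

lemma above_rev:
  assumes en: "endpoint a = (i, j)" "endpoint b = (i, j)" and ab: "above b a"
  shows "above (rev a) (rev b)"
proof -
  have le: "\<forall>x. nbi b x \<le> nbi a x" using above_nbi[OF en(2) en(1)] ab by simp
  have "\<forall>x. nbi (rev a) x \<le> nbi (rev b) x"
  proof
    fix x show "nbi (rev a) x \<le> nbi (rev b) x"
    proof (cases "x \<le> Suc j")
      case True thus ?thesis using nbi_rev[OF en(1) True] nbi_rev[OF en(2) True] le by auto
    next
      case False
      have "endpoint (rev a) = (i, j)" "endpoint (rev b) = (i, j)" using en by auto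
      thus ?thesis using nbi_big[of "rev a" i j x] nbi_big[of "rev b" i j x] False by auto
    qed
  qed
  thus ?thesis using above_nbi[of "rev a" i j "rev b"] en by simp
qed

theorem corollary1:
  fixes i j :: nat and R :: "walk \<times> walk \<times> walk"
  assumes "R \<in> Rset i j"
  shows "tau R \<in> Gset i j \<longleftrightarrow> R \<in> Gset i j"
proof -
  obtain \<nu> g g' where R: "R = (\<nu>, g, g')" by (cases R) auto
  have en: "endpoint \<nu> = (i, j)" "endpoint g = (i, j)" "endpoint g' = (i, j)"
    and ab: "above g' g" "above g \<nu>" using assms unfolding R Rset_def by auto
  have ab2: "above g' \<nu>" using above_trans_nbi[OF en(3) en(2) en(1) ab] .
  define n where "n = Suc j"
  define U where "U = nbi \<nu>"
  define V where "V = nbi g"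
  define W where "W = nbi g'"
  have G1: "R \<in> Gset i j \<longleftrightarrow> goodR U V W n"
    unfolding R Gset_def U_def V_def W_def n_def using tam_char[OF en ab(2) ab(1)] en ab ab2
    by (auto simp: wset_iff)
  have tR: "tau R = (rev g', rev g, rev \<nu>)" unfolding tau_def R mir_def by simp
  have enr: "endpoint (rev \<nu>) = (i, j)" "endpoint (rev g) = (i, j)" "endpoint (rev g') = (i, j)" using en by auto
  have abr: "above (rev g) (rev g')" "above (rev \<nu>) (rev g)" "above (rev \<nu>) (rev g')"
    using above_rev[OF en(2) en(3) ab(1)] above_rev[OF en(1) en(2) ab(2)] above_rev[OF en(1) en(3) ab2] by auto
  have G2: "tau R \<in> Gset i j \<longleftrightarrow> goodR (nbi (rev g')) (nbi (rev g)) (nbi (rev \<nu>)) n"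
    unfolding tR Gset_def n_def using tam_char[OF enr(3) enr(2) enr(1) abr(1) abr(2)] enr abr
    by (auto simp: wset_iff)
  have Un: "U n = int i" unfolding U_def n_def using nbi_top[OF en(1)] .
  have cong: "goodR (nbi (rev g')) (nbi (rev g)) (nbi (rev \<nu>)) n =
      goodR (\<lambda>k. U n - W (n - k)) (\<lambda>k. U n - V (n - k)) (\<lambda>k. U n - U (n - k)) n"
  proof -
    have nj: "nabsc \<nu> j = i" using nabsc_ge[of \<nu> j] en unfolding endpoint_def by auto
    show ?thesis by (rule goodR_cong) (auto simp: U_def V_def W_def n_def nbi_rev en nj)
  qed
  have dual: "goodR U V W n \<longleftrightarrow> goodR (\<lambda>k. U n - W (n - k)) (\<lambda>k. U n - V (n - k)) (\<lambda>k. U n - U (n - k)) n"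
  proof (rule good_dual)
    show "\<forall>x<n. U x \<le> U (Suc x)" "\<forall>x<n. V x \<le> V (Suc x)" "\<forall>x<n. W x \<le> W (Suc x)"
      unfolding U_def V_def W_def using nbi_mono by auto
    show "W 0 = 0" unfolding W_def by simp
    show "W n = U n" unfolding W_def U_def n_def using nbi_top[OF en(3)] nbi_top[OF en(1)] by simp
  qed
  show ?thesis using G1 G2 cong dual by simp
qed

end
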